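(* Let $\mathcal V=(0,1/16)^2$ and let $\mathcal K$ be the set of $(p,q)\in\mathcal V$ for which $K_{pq}$ is a twofold Cantor set. Then $\mathcal K$ has full two-dimensional Lebesgue measure in $\mathcal V$, and its complement $\mathcal V\setminus\mathcal K$ is uncountable and dense in $\mathcal V$.
   Context: For $p,q\in(0,1/2)$ let $S_1(x)=px$, $S_2(x)=qx$, $S_3(x)=px+1-p$, $S_4(x)=qx+1-q$, let $K_{pq}$ be the attractor of $\{S_1,S_2,S_3,S_4\}$ (the unique nonempty compact $K\subset\mathbb R$ with $K=\bigcup_{i=1}^4S_i(K)$), and let $A=S_3(K_{pq})\cup S_4(K_{pq})$. $K_{pq}$ is called a twofold Cantor set if $S_1^m(A)\cap S_2^n(A)=\varnothing$ for all $m,n\in\mathbb N$. *)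

theory Defs
  imports "HOL-Analysis.Analysis"
begin

definition S1 :: "real \<Rightarrow> real \<Rightarrow> real \<Rightarrow> real" where "S1 p q x = p * x"
definition S2 :: "real \<Rightarrow> real \<Rightarrow> real \<Rightarrow> real" where "S2 p q x = q * x"
definition S3 :: "real \<Rightarrow> real \<Rightarrow> real \<Rightarrow> real" where "S3 p q x = p * x + 1 - p"
definition S4 :: "real \<Rightarrow> real \<Rightarrow> real \<Rightarrow> real" where "S4 p q x = q * x + 1 - q"

definition Kpq :: "real \<Rightarrow> real \<Rightarrow> real set" where
  "Kpq p q = (THE K. compact K \<and> K \<noteq> {} \<and>
      K = S1 p q ` K \<union> S2 p q ` K \<union> S3 p q ` K \<union> S4 p q ` K)"

definition Apq :: "real \<Rightarrow> real \<Rightarrow> real set" where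
  "Apq p q = S3 p q ` Kpq p q \<union> S4 p q ` Kpq p q"

definition twofold_cantor :: "real \<Rightarrow> real \<Rightarrow> bool" where
  "twofold_cantor p q \<longleftrightarrow>
     (\<forall>m n::nat. m \<ge> 1 \<longrightarrow> n \<ge> 1 \<longrightarrow>
        (S1 p q ^^ m) ` Apq p q \<inter> (S2 p q ^^ n) ` Apq p q = {})"

end

theory Submission
  imports Defs
begin


definition Si :: "nat \<Rightarrow> real \<Rightarrow> real \<Rightarrow> real \<Rightarrow> real" where
  "Si i p q x = (if i = 1 then p * x else if i = 2 then q * x
     else if i = 3 then p * x + 1 - p else q * x + 1 - q)"

definition cf :: "nat \<Rightarrow> real \<Rightarrow> real \<Rightarrow> real" where
  "cf i p q = (if i = 1 \<or> i = 3 then p else q)"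
definition df :: "nat \<Rightarrow> real \<Rightarrow> real \<Rightarrow> real" where
  "df i p q = (if i = 1 \<or> i = 2 then 0 else 1 - cf i p q)"

lemma Si_form: "Si i p q x = cf i p q * x + df i p q"
  by (simp add: Si_def cf_def df_def)

lemma cf_bounds: "cf i p q = p \<or> cf i p q = q"
  by (simp add: cf_def)

lemma df_cases: "df i p q = 0 \<or> df i p q = 1 - cf i p q"
  by (simp add: df_def)

fun Sw :: "real \<Rightarrow> real \<Rightarrow> nat list \<Rightarrow> real \<Rightarrow> real" where
  "Sw p q [] x = x"
| "Sw p q (i # w) x = Si i p q (Sw p q w x)"

definition invar :: "real \<Rightarrow> real \<Rightarrow> real set \<Rightarrow> bool" where
  "invar p q K \<longleftrightarrow> compact K \<and> K \<noteq> {} \<and>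
      K = S1 p q ` K \<union> S2 p q ` K \<union> S3 p q ` K \<union> S4 p q ` K"

lemma union_Si: "S1 p q ` K \<union> S2 p q ` K \<union> S3 p q ` K \<union> S4 p q ` K
   = (\<Union>i\<in>{1,2,3,4}. Si i p q ` K)"
  by (auto simp: Si_def S1_def S2_def S3_def S4_def image_def)

lemma aff_range:
  fixes c d x :: real
  assumes "0 \<le> c" "c \<le> 1" "0 \<le> x" "x \<le> 1" "d = 0 \<or> d = 1 - c"
  shows "0 \<le> c * x + d \<and> c * x + d \<le> 1"
proof -
  have "c * x \<le> c" using assms mult_left_le by blast
  moreover have "0 \<le> c * x" using assms by simp
  ultimately show ?thesis using assms by linarith
qed

lemma Si_range:
  assumes "0 \<le> p" "p \<le> 1" "0 \<le> q" "q \<le> 1" "0 \<le> x" "x \<le> 1"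
  shows "0 \<le> Si i p q x \<and> Si i p q x \<le> 1"
proof -
  have "0 \<le> cf i p q" "cf i p q \<le> 1" using cf_bounds[of i p q] assms by auto
  then show ?thesis unfolding Si_form using aff_range df_cases assms by blast
qed

lemma Sw_range:
  assumes "0 \<le> p" "p \<le> 1" "0 \<le> q" "q \<le> 1" "0 \<le> x" "x \<le> 1"
  shows "0 \<le> Sw p q w x \<and> Sw p q w x \<le> 1"
  by (induction w) (use assms Si_range in auto)

lemma Si_lip:
  assumes "0 \<le> p" "0 \<le> q"
  shows "\<bar>Si i p q x - Si i p q y\<bar> \<le> max p q * \<bar>x - y\<bar>"
proof -
  have "Si i p q x - Si i p q y = cf i p q * (x - y)"
    by (simp add: Si_form algebra_simps)
  then have "\<bar>Si i p q x - Si i p q y\<bar> = cf i p q * \<bar>x - y\<bar>"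
    using cf_bounds[of i p q] assms by (auto simp: abs_mult)
  also have "\<dots> \<le> max p q * \<bar>x - y\<bar>"
    using cf_bounds[of i p q] by (intro mult_right_mono) auto
  finally show ?thesis .
qed

lemma Sw_lip:
  assumes "0 \<le> p" "0 \<le> q"
  shows "\<bar>Sw p q w x - Sw p q w y\<bar> \<le> max p q ^ length w * \<bar>x - y\<bar>"
proof (induction w)
  case Nil then show ?case by simp
next
  case (Cons i w)
  have "\<bar>Sw p q (i # w) x - Sw p q (i # w) y\<bar> \<le> max p q * \<bar>Sw p q w x - Sw p q w y\<bar>"
    using Si_lip[OF assms] by simp
  also have "\<dots> \<le> max p q * (max p q ^ length w * \<bar>x - y\<bar>)"
    using Cons assms by (intro mult_left_mono) auto
  finally show ?case by simp
qed

lemma aff_sup: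
  fixes c d x M :: real
  assumes "0 < c" "c < 1" "x \<le> M" "M = c * x + d" "d = 0 \<or> d = 1 - c"
  shows "M \<le> 1"
proof -
  have "c * x \<le> c * M" using assms by simp
  then have "(1 - c) * M \<le> d" using assms by (simp add: algebra_simps)
  moreover have "d \<le> (1 - c) * 1" using assms by auto
  ultimately have "(1 - c) * M \<le> (1 - c) * 1" by linarith
  then show ?thesis by (rule mult_left_le_imp_le) (use assms in auto)
qed

lemma aff_inf:
  fixes c d x m :: real
  assumes "0 < c" "c < 1" "m \<le> x" "m = c * x + d" "d = 0 \<or> d = 1 - c"
  shows "0 \<le> m"
proof -
  have "c * m \<le> c * x" using assms by simp
  then have "d \<le> (1 - c) * m" using assms by (simp add: algebra_simps)
  moreover have "(1 - c) * 0 \<le> d" using assms by auto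
  ultimately have "(1 - c) * 0 \<le> (1 - c) * m" by linarith
  then show ?thesis by (rule mult_left_le_imp_le) (use assms in auto)
qed

lemma invar_sub01:
  assumes "0 < p" "p < 1" "0 < q" "q < 1" "invar p q K"
  shows "K \<subseteq> {0..1}"
proof -
  have cK: "compact K" and ne: "K \<noteq> {}" and eq: "K = (\<Union>i\<in>{1,2,3,4}. Si i p q ` K)"
    using assms(5) by (auto simp: invar_def union_Si)
  have c01: "0 < cf i p q \<and> cf i p q < 1" for i using cf_bounds[of i p q] assms by auto
  obtain M where M: "M \<in> K" "\<And>x. x \<in> K \<Longrightarrow> x \<le> M"
    using compact_attains_sup[OF cK ne] by blast
  obtain m where m: "m \<in> K" "\<And>x. x \<in> K \<Longrightarrow> m \<le> x"
    using compact_attains_inf[OF cK ne] by blast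
  have "M \<le> 1"
  proof -
    from M(1) eq obtain i x where "x \<in> K" "M = Si i p q x" by blast
    then show ?thesis using aff_sup[of "cf i p q" x M "df i p q"] c01[of i] M(2) df_cases[of i p q]
      by (simp add: Si_form)
  qed
  moreover have "0 \<le> m"
  proof -
    from m(1) eq obtain i x where "x \<in> K" "m = Si i p q x" by blast
    then show ?thesis using aff_inf[of "cf i p q" m x "df i p q"] c01[of i] m(2) df_cases[of i p q]
      by (simp add: Si_form)
  qed
  ultimately show ?thesis using M m by force
qed



lemma invar_Si: "invar p q K \<Longrightarrow> K = (\<Union>i\<in>{1,2,3,4}. Si i p q ` K)"
  by (simp add: invar_def union_Si)

lemma invar_words:
  assumes "invar p q K"
  shows "x \<in> K \<Longrightarrow> \<exists>w y. length w = k \<and> set w \<subseteq> {1,2,3,4} \<and> y \<in> K \<and> x = Sw p q w y"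
proof (induction k arbitrary: x)
  case 0 then show ?case by (intro exI[of _ "[]"] exI[of _ x]) auto
next
  case (Suc k)
  from Suc.prems invar_Si[OF assms] obtain i y' where i: "i \<in> {1,2,3,4}" "y' \<in> K" "x = Si i p q y'"
    by blast
  from Suc.IH[OF i(2)] obtain w y where "length w = k" "set w \<subseteq> {1,2,3,4}" "y \<in> K" "y' = Sw p q w y"
    by blast
  then show ?case using i by (intro exI[of _ "i # w"] exI[of _ y]) auto
qed

lemma invar_closed_Sw:
  assumes "invar p q K" "set w \<subseteq> {1,2,3,4}" "y \<in> K"
  shows "Sw p q w y \<in> K"
  using assms(2)
proof (induction w)
  case Nil then show ?case using assms by simp
next
  case (Cons i w)
  then have "i \<in> {1,2,3,4}" "Sw p q w y \<in> K" by auto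
  then show ?case using invar_Si[OF assms(1)] by auto
qed

lemma invar_unique:
  assumes pq: "0 < p" "p < 1" "0 < q" "q < 1" and K: "invar p q K" and K': "invar p q K'"
  shows "K \<subseteq> K'"
proof
  fix x assume x: "x \<in> K"
  have cl: "closed K'" using K' by (simp add: invar_def compact_imp_closed)
  obtain z where z: "z \<in> K'" using K' by (auto simp: invar_def)
  have K01: "K \<subseteq> {0..1}" "K' \<subseteq> {0..1}" using invar_sub01 pq K K' by auto
  have "x \<in> closure K'"
    unfolding closure_approachable
  proof (intro allI impI)
    fix e :: real assume "0 < e"
    have "max p q < 1" using pq by simp
    then obtain k where k: "max p q ^ k < e" using real_arch_pow_inv[OF \<open>0 < e\<close>] by blast
    obtain w y where wy: "length w = k" "set w \<subseteq> {1,2,3,4}" "y \<in> K" "x = Sw p q w y"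
      using invar_words[OF K x] by blast
    have "Sw p q w z \<in> K'" using invar_closed_Sw[OF K' wy(2) z] .
    moreover have "\<bar>Sw p q w z - Sw p q w y\<bar> \<le> max p q ^ k * \<bar>z - y\<bar>"
      using Sw_lip[of p q w z y] pq wy(1) by simp
    moreover have "\<bar>z - y\<bar> \<le> 1" using K01 z wy(3) by fastforce
    moreover have "0 \<le> max p q ^ k" using pq by simp
    ultimately have "dist (Sw p q w z) x < e" using k wy(4)
      by (simp add: dist_real_def) (smt (verit) mult_left_le)
    then show "\<exists>y\<in>K'. dist y x < e" using \<open>Sw p q w z \<in> K'\<close> by blast
  qed
  then show "x \<in> K'" using cl by (simp add: closure_closed)
qed

lemma closure_Si_image:
  assumes "bounded P"
  shows "closure (Si i p q ` P) = Si i p q ` closure P"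
proof -
  have cont: "continuous_on A (Si i p q)" for A
    unfolding Si_form[abs_def] by (intro continuous_intros)
  have "compact (closure P)" using assms by (simp add: compact_closure)
  then have "compact (Si i p q ` closure P)" by (intro compact_continuous_image cont)
  then have c: "closed (Si i p q ` closure P)" by (rule compact_imp_closed)
  have "closure (Si i p q ` P) \<subseteq> Si i p q ` closure P"
    by (rule closure_minimal) (use closure_subset in auto, rule c)
  moreover have "Si i p q ` closure P \<subseteq> closure (Si i p q ` P)"
    by (rule image_closure_subset[OF cont]) (auto intro: closure_subset[THEN subsetD])
  ultimately show ?thesis by blast
qed

lemma invar_exists:
  assumes pq: "0 < p" "p < 1" "0 < q" "q < 1"
  shows "\<exists>K. invar p q K"
proof -
  define P where "P = (\<lambda>w. Sw p q w 0) ` {w. set w \<subseteq> {1,2,3,4}}"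
  have P01: "P \<subseteq> {0..1}" unfolding P_def using Sw_range[of p q 0] pq by auto
  then have bP: "bounded P" by (meson bounded_closed_interval bounded_subset)
  have "0 \<in> P" unfolding P_def by (auto intro: image_eqI[of _ _ "[]"])
  have Peq: "P = (\<Union>i\<in>{1,2,3,4}. Si i p q ` P)"
  proof
    show "P \<subseteq> (\<Union>i\<in>{1,2,3,4}. Si i p q ` P)"
    proof
      fix x assume "x \<in> P"
      then obtain w where w: "set w \<subseteq> {1,2,3,4}" "x = Sw p q w 0" by (auto simp: P_def)
      show "x \<in> (\<Union>i\<in>{1,2,3,4}. Si i p q ` P)"
      proof (cases w)
        case Nil
        then have "x = Si 1 p q 0" using w by (simp add: Si_def)
        then show ?thesis using \<open>0 \<in> P\<close> by blast
      next
        case (Cons i w')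
        then have "x = Si i p q (Sw p q w' 0)" "i \<in> {1,2,3,4}" "Sw p q w' 0 \<in> P"
          using w by (auto simp: P_def)
        then show ?thesis by blast
      qed
    qed
  next
    show "(\<Union>i\<in>{1,2,3,4}. Si i p q ` P) \<subseteq> P"
    proof clarify
      fix i x assume "i \<in> {1::nat,2,3,4}" "x \<in> P"
      then obtain w where w: "set w \<subseteq> {1,2,3,4}" "x = Sw p q w 0" by (auto simp: P_def)
      have "Si i p q x = Sw p q (i # w) 0" using w by simp
      moreover have "set (i # w) \<subseteq> {1,2,3,4}" using w \<open>i \<in> _\<close> by auto
      ultimately show "Si i p q x \<in> P" unfolding P_def by blast
    qed
  qed
  define K where "K = closure P"
  have "compact K" unfolding K_def using bP by (simp add: compact_closure)
  moreover have "K \<noteq> {}" unfolding K_def using \<open>0 \<in> P\<close> closure_subset by blast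
  moreover have "K = (\<Union>i\<in>{1,2,3,4}. Si i p q ` K)"
  proof -
    have "K = closure (\<Union>i\<in>{1,2,3,4}. Si i p q ` P)" unfolding K_def using Peq by simp
    also have "\<dots> = (\<Union>i\<in>{1,2,3,4}. closure (Si i p q ` P))"
      by (simp add: closure_Un)
    also have "\<dots> = (\<Union>i\<in>{1,2,3,4}. Si i p q ` K)"
      unfolding K_def using closure_Si_image[OF bP] by simp
    finally show ?thesis .
  qed
  ultimately show ?thesis unfolding invar_def union_Si by blast
qed

lemma Kpq_invar:
  assumes pq: "0 < p" "p < 1" "0 < q" "q < 1"
  shows "invar p q (Kpq p q)"
proof -
  have ex1: "\<exists>!K. invar p q K"
    using invar_exists[OF pq] invar_unique[OF pq] by (metis subset_antisym)
  show ?thesis unfolding Kpq_def using theI'[OF ex1[unfolded invar_def]]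
    by (simp add: invar_def)
qed

lemma invar_one:
  assumes pq: "0 < p" "p < 1" "0 < q" "q < 1" and K: "invar p q K"
  shows "1 \<in> K"
proof -
  have cK: "compact K" and ne: "K \<noteq> {}" using K by (auto simp: invar_def)
  obtain M where M: "M \<in> K" "\<And>x. x \<in> K \<Longrightarrow> x \<le> M"
    using compact_attains_sup[OF cK ne] by blast
  have "Si 3 p q M \<in> K" using invar_Si[OF K] M(1) by blast
  then have "p * M + 1 - p \<le> M" using M(2) by (simp add: Si_def)
  then have "(1 - p) * 1 \<le> (1 - p) * M" by (simp add: algebra_simps)
  then have "1 \<le> M" by (rule mult_left_le_imp_le) (use pq in auto)
  moreover have "M \<le> 1" using invar_sub01[OF pq K] M(1) by auto
  ultimately show ?thesis using M(1) by simp
qed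



lemma Sw_lip2:
  assumes "0 \<le> p1" "p1 \<le> 1/2" "0 \<le> q1" "q1 \<le> 1/2" "0 \<le> p2" "p2 \<le> 1/2" "0 \<le> q2" "q2 \<le> 1/2"
    "0 \<le> x" "x \<le> 1" "\<bar>p2 - p1\<bar> \<le> D" "\<bar>q2 - q1\<bar> \<le> D"
  shows "\<bar>Sw p2 q2 w x - Sw p1 q1 w x\<bar> \<le> 2 * D"
proof (induction w)
  case Nil then show ?case using assms by simp
next
  case (Cons i w)
  define g1 where "g1 = Sw p1 q1 w x"
  define g2 where "g2 = Sw p2 q2 w x"
  have g1: "0 \<le> g1" "g1 \<le> 1" using Sw_range[of p1 q1 x w] assms by (auto simp: g1_def)
  have g2: "0 \<le> g2" "g2 \<le> 1" using Sw_range[of p2 q2 x w] assms by (auto simp: g2_def)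
  have IH: "\<bar>g2 - g1\<bar> \<le> 2 * D" using Cons by (simp add: g1_def g2_def)
  have gen: "\<bar>(c2 - c1) * h + c1 * (g2 - g1)\<bar> \<le> 2 * D"
    if "\<bar>c2 - c1\<bar> \<le> D" "0 \<le> c1" "c1 \<le> 1/2" "\<bar>h\<bar> \<le> 1" for c1 c2 h :: real
  proof -
    have "\<bar>(c2 - c1) * h\<bar> \<le> D" using that
      by (simp add: abs_mult) (metis abs_ge_zero mult_le_one mult_right_le_one_le order_trans mult_mono)
    moreover have "c1 * \<bar>g2 - g1\<bar> \<le> 1/2 * (2 * D)"
      by (rule mult_mono) (use that IH in auto)
    then have "\<bar>c1 * (g2 - g1)\<bar> \<le> 1/2 * (2 * D)" using that by (simp add: abs_mult)
    moreover have "\<bar>(c2 - c1) * h + c1 * (g2 - g1)\<bar> \<le> \<bar>(c2 - c1) * h\<bar> + \<bar>c1 * (g2 - g1)\<bar>"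
      by (rule abs_triangle_ineq)
    ultimately show ?thesis by linarith
  qed
  have "Sw p2 q2 (i # w) x - Sw p1 q1 (i # w) x = Si i p2 q2 g2 - Si i p1 q1 g1"
    by (simp add: g1_def g2_def)
  moreover have "\<bar>Si i p2 q2 g2 - Si i p1 q1 g1\<bar> \<le> 2 * D"
  proof -
    consider "i = 1" | "i = 2" | "i = 3" | "i \<noteq> 1 \<and> i \<noteq> 2 \<and> i \<noteq> 3" by blast
    then show ?thesis
    proof cases
      case 1
      then have "Si i p2 q2 g2 - Si i p1 q1 g1 = (p2 - p1) * g2 + p1 * (g2 - g1)"
        by (simp add: Si_def algebra_simps)
      then show ?thesis using gen[of p2 p1 g2] assms g2 by simp
    next
      case 2
      then have "Si i p2 q2 g2 - Si i p1 q1 g1 = (q2 - q1) * g2 + q1 * (g2 - g1)"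
        by (simp add: Si_def algebra_simps)
      then show ?thesis using gen[of q2 q1 g2] assms g2 by simp
    next
      case 3
      then have "Si i p2 q2 g2 - Si i p1 q1 g1 = (p2 - p1) * (g2 - 1) + p1 * (g2 - g1)"
        by (simp add: Si_def algebra_simps)
      then show ?thesis using gen[of p2 p1 "g2 - 1"] assms g2 by simp
    next
      case 4
      then have "Si i p2 q2 g2 - Si i p1 q1 g1 = (q2 - q1) * (g2 - 1) + q1 * (g2 - g1)"
        by (simp add: Si_def algebra_simps)
      then show ?thesis using gen[of q2 q1 "g2 - 1"] assms g2 by simp
    qed
  qed
  ultimately show ?case by simp
qed

lemma A_bound:
  assumes "i \<in> {3,4}" "0 \<le> p" "p \<le> 1" "0 \<le> q" "q \<le> 1" "0 \<le> g" "g \<le> 1"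
  shows "1 - max p q \<le> Si i p q g \<and> Si i p q g \<le> 1"
proof -
  have "p * g \<le> p" "q * g \<le> q" "0 \<le> p * g" "0 \<le> q * g"
    using assms by (auto simp: mult_left_le)
  moreover have "p \<le> max p q" "q \<le> max p q" by auto
  moreover have "Si i p q g = p * g + 1 - p \<or> Si i p q g = q * g + 1 - q"
    using assms(1) by (auto simp: Si_def)
  ultimately show ?thesis by linarith
qed

lemma slice_diam:
  fixes P q1 q2 aP aQ bP bQ \<delta> \<epsilon> :: real
  assumes "q1 \<le> q2" "0 < \<delta>" "\<delta> \<le> q1" "q2 \<le> 1/16" "n \<ge> 1"
    "15/16 \<le> aP" "aP \<le> 1" "15/16 \<le> aQ" "aQ \<le> 1" "15/16 \<le> bP" "bP \<le> 1" "15/16 \<le> bQ" "bQ \<le> 1"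
    "\<bar>aQ - aP\<bar> \<le> 2 * (q2 - q1)" "\<bar>bQ - bP\<bar> \<le> 2 * (q2 - q1)"
    "\<bar>P * aP - q1 ^ n * bP\<bar> \<le> \<epsilon>" "\<bar>P * aQ - q2 ^ n * bQ\<bar> \<le> \<epsilon>"
  shows "q2 - q1 \<le> 4 * \<epsilon> / \<delta> ^ (n - 1)"
proof -
  define h where "h = q2 - q1"
  define Q where "Q = q1 ^ (n - 1)"
  have h0: "0 \<le> h" using assms by (simp add: h_def)
  have dQ: "\<delta> ^ (n - 1) \<le> Q" unfolding Q_def using assms by (intro power_mono) auto
  have d0: "0 < \<delta> ^ (n - 1)" using assms by simp
  have Q0: "0 \<le> Q" using dQ d0 by simp
  have pn: "x ^ n = x * x ^ (n - 1)" for x :: real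
    using assms(5) by (cases n) auto
  have q1n: "q1 ^ n = q1 * Q" by (simp add: pn Q_def)
  have "q2 * Q \<le> q2 ^ n"
    unfolding pn Q_def using assms by (intro mult_left_mono power_mono) auto
  then have s1: "h * Q \<le> q2 ^ n - q1 ^ n" using q1n by (simp add: h_def algebra_simps)
  have "(15/16) * (15/16) \<le> bQ * aP" using assms by (intro mult_mono) auto
  then have s2: "7/8 \<le> bQ * aP" by simp
  have s3: "h * Q * (7/8) \<le> (q2 ^ n - q1 ^ n) * (bQ * aP)"
    using s1 s2 mult_nonneg_nonneg[OF h0 Q0] by (intro mult_mono) auto
  have "bQ * aP - bP * aQ = (bQ - bP) * aP + bP * (aP - aQ)" by (simp add: algebra_simps)
  moreover have "\<bar>bQ - bP\<bar> * \<bar>aP\<bar> \<le> (2 * h) * 1"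
    by (rule mult_mono) (use assms in \<open>auto simp: h_def\<close>)
  then have "\<bar>(bQ - bP) * aP\<bar> \<le> 2 * h" by (simp add: abs_mult)
  moreover have "\<bar>bP\<bar> * \<bar>aP - aQ\<bar> \<le> 1 * (2 * h)"
    by (rule mult_mono) (use assms in \<open>auto simp: h_def abs_minus_commute\<close>)
  then have "\<bar>bP * (aP - aQ)\<bar> \<le> 2 * h" by (simp add: abs_mult)
  ultimately have s4: "\<bar>bQ * aP - bP * aQ\<bar> \<le> 4 * h" by linarith
  have "q1 ^ n * \<bar>bQ * aP - bP * aQ\<bar> \<le> (1/16 * Q) * (4 * h)"
    unfolding q1n using s4 assms Q0 by (intro mult_mono) auto
  then have s5: "\<bar>q1 ^ n * (bQ * aP - bP * aQ)\<bar> \<le> h * Q / 4"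
    using assms by (simp add: abs_mult mult_ac)
  define X where "X = q2 ^ n * bQ * aP - q1 ^ n * bP * aQ"
  have "X = (q2 ^ n - q1 ^ n) * (bQ * aP) + q1 ^ n * (bQ * aP - bP * aQ)"
    by (simp add: X_def algebra_simps)
  then have s6: "h * Q / 2 \<le> X" using s3 s5 by linarith
  define e1 where "e1 = P * aP - q1 ^ n * bP"
  define e2 where "e2 = P * aQ - q2 ^ n * bQ"
  have "X = e1 * aQ - e2 * aP" by (simp add: X_def e1_def e2_def algebra_simps)
  moreover have "\<bar>e1\<bar> * \<bar>aQ\<bar> \<le> \<epsilon> * 1"
    by (rule mult_mono) (use assms in \<open>auto simp: e1_def\<close>)
  then have "\<bar>e1 * aQ\<bar> \<le> \<epsilon>" by (simp add: abs_mult)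
  moreover have "\<bar>e2\<bar> * \<bar>aP\<bar> \<le> \<epsilon> * 1"
    by (rule mult_mono) (use assms in \<open>auto simp: e2_def\<close>)
  then have "\<bar>e2 * aP\<bar> \<le> \<epsilon>" by (simp add: abs_mult)
  ultimately have "X \<le> 2 * \<epsilon>" by linarith
  then have "h * \<delta> ^ (n - 1) \<le> 4 * \<epsilon>"
    using s6 mult_left_mono[OF dQ h0] by linarith
  then show ?thesis using d0 by (simp add: h_def pos_le_divide_eq)
qed



definition Gf :: "nat \<Rightarrow> nat \<Rightarrow> nat list \<Rightarrow> nat list \<Rightarrow> real \<times> real \<Rightarrow> real" where
  "Gf m n u v z = fst z ^ m * Sw (fst z) (snd z) u 0 - snd z ^ n * Sw (fst z) (snd z) v 0"

definition Tset :: "nat \<Rightarrow> nat \<Rightarrow> nat list \<Rightarrow> nat list \<Rightarrow> real \<Rightarrow> real \<Rightarrow> real \<Rightarrow> (real \<times> real) set" where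
  "Tset m n u v \<delta> r0 \<epsilon> = {z. \<delta> \<le> fst z \<and> fst z \<le> r0 \<and> \<delta> \<le> snd z \<and> snd z \<le> r0 \<and> \<bar>Gf m n u v z\<bar> \<le> \<epsilon>}"

lemma cont_Sw: "continuous_on UNIV (\<lambda>z::real \<times> real. Sw (fst z) (snd z) w x)"
proof (induction w)
  case Nil then show ?case by (simp add: continuous_on_const)
next
  case (Cons i w)
  consider "i = 1" | "i = 2" | "i = 3" | "i \<noteq> 1 \<and> i \<noteq> 2 \<and> i \<noteq> 3" by blast
  then show ?case
    by cases (simp_all add: Si_def, (intro continuous_intros Cons)+)
qed

lemma Tset_sets: "Tset m n u v \<delta> r0 \<epsilon> \<in> sets lborel"
proof -
  have c: "continuous_on UNIV (\<lambda>z::real\<times>real. \<bar>Gf m n u v z\<bar>)"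
    unfolding Gf_def by (intro continuous_intros cont_Sw)
  have "closed (Tset m n u v \<delta> r0 \<epsilon>)"
    unfolding Tset_def
    by (intro closed_Collect_conj closed_Collect_le c continuous_intros)
  then show ?thesis by simp
qed

lemma slice_small:
  assumes d: "0 < \<delta>" "r0 \<le> 1/16" "n \<ge> 1"
    and u: "u = i # w" "i \<in> {3,4}" and v: "v = j # w'" "j \<in> {3,4}"
    and z1: "(p, q1) \<in> Tset m n u v \<delta> r0 \<epsilon>" and z2: "(p, q2) \<in> Tset m n u v \<delta> r0 \<epsilon>"
    and le: "q1 \<le> q2"
  shows "q2 - q1 \<le> 4 * \<epsilon> / \<delta> ^ (n - 1)"
proof -
  from z1 z2 have b: "\<delta> \<le> p" "p \<le> r0" "\<delta> \<le> q1" "q1 \<le> r0" "\<delta> \<le> q2" "q2 \<le> r0"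
    and G1: "\<bar>Gf m n u v (p, q1)\<bar> \<le> \<epsilon>" and G2: "\<bar>Gf m n u v (p, q2)\<bar> \<le> \<epsilon>"
    by (auto simp: Tset_def)
  have ab: "15/16 \<le> Sw p q (k # w0) 0 \<and> Sw p q (k # w0) 0 \<le> 1"
    if "k \<in> {3,4}" "\<delta> \<le> q" "q \<le> r0" for k w0 q
  proof -
    have "0 \<le> Sw p q w0 0 \<and> Sw p q w0 0 \<le> 1" using Sw_range[of p q 0 w0] b that d by auto
    then have "1 - max p q \<le> Si k p q (Sw p q w0 0) \<and> Si k p q (Sw p q w0 0) \<le> 1"
      using A_bound[OF that(1), of p q] b that d by auto
    moreover have "max p q \<le> 1/16" using b that d by auto
    ultimately show ?thesis by simp
  qed
  have lip: "\<bar>Sw p q2 x 0 - Sw p q1 x 0\<bar> \<le> 2 * (q2 - q1)" for x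
    using Sw_lip2[of p q1 p q2 0 "q2 - q1" x] b d le by auto
  show ?thesis
    apply (rule slice_diam[where P = "p ^ m" and aP = "Sw p q1 u 0" and aQ = "Sw p q2 u 0"
          and bP = "Sw p q1 v 0" and bQ = "Sw p q2 v 0"])
    using le d b ab[OF u(2), of q1 w] ab[OF u(2), of q2 w] ab[OF v(2), of q1 w']
      ab[OF v(2), of q2 w'] lip[of u] lip[of v] G1 G2 u v
    by (auto simp: Gf_def)
qed

lemma Tset_measure:
  assumes d: "0 < \<delta>" "\<delta> \<le> r0" "r0 \<le> 1/16" "n \<ge> 1" "0 \<le> \<epsilon>"
    and u: "u = i # w" "i \<in> {3,4}" and v: "v = j # w'" "j \<in> {3,4}"
  shows "emeasure lborel (Tset m n u v \<delta> r0 \<epsilon>) \<le> ennreal (8 * \<epsilon> / \<delta> ^ (n - 1))"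
proof -
  define T where "T = Tset m n u v \<delta> r0 \<epsilon>"
  define L where "L = 4 * \<epsilon> / \<delta> ^ (n - 1)"
  have L0: "0 \<le> L" using d by (simp add: L_def)
  have Tb: "T \<in> sets borel" using Tset_sets[of m n u v \<delta> r0 \<epsilon>] by (simp add: T_def)
  have slice: "emeasure lborel (Pair x -` T) \<le> ennreal (2 * L) * indicator {\<delta>..r0} x" for x
  proof (cases "Pair x -` T = {}")
    case True then show ?thesis by simp
  next
    case False
    then obtain q0 where q0: "(x, q0) \<in> T" by auto
    then have x: "x \<in> {\<delta>..r0}" by (auto simp: T_def Tset_def)
    have "Pair x -` T \<subseteq> {q0 - L .. q0 + L}"
    proof
      fix q assume "q \<in> Pair x -` T"
      then have q: "(x, q) \<in> T" by simp
      show "q \<in> {q0 - L .. q0 + L}"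
      proof (cases "q0 \<le> q")
        case True
        then show ?thesis using slice_small[OF d(1) d(3) d(4) u v, of x q0 m \<epsilon> q] q0 q L0
          by (auto simp: T_def L_def)
      next
        case False
        then show ?thesis using slice_small[OF d(1) d(3) d(4) u v, of x q m \<epsilon> q0] q0 q L0
          by (auto simp: T_def L_def)
      qed
    qed
    then have "emeasure lborel (Pair x -` T) \<le> emeasure lborel {q0 - L .. q0 + L}"
      by (intro emeasure_mono) auto
    also have "\<dots> = ennreal (2 * L)" using L0 by simp
    finally show ?thesis using x by simp
  qed
  have "emeasure (lborel :: (real \<times> real) measure) T = emeasure (lborel \<Otimes>\<^sub>M lborel) T"
    by (simp add: lborel_prod)
  also have "\<dots> = (\<integral>\<^sup>+x. emeasure lborel (Pair x -` T) \<partial>lborel)"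
    by (rule lborel.emeasure_pair_measure_alt) (unfold lborel_prod, use Tb in simp)
  also have "\<dots> \<le> (\<integral>\<^sup>+x. ennreal (2 * L) * indicator {\<delta>..r0} x \<partial>lborel)"
    by (intro nn_integral_mono slice)
  also have "\<dots> = ennreal (2 * L) * ennreal (r0 - \<delta>)"
    using d by (subst nn_integral_cmult_indicator) auto
  also have "\<dots> = ennreal (2 * L * (r0 - \<delta>))"
    using L0 d by (simp add: ennreal_mult)
  also have "\<dots> \<le> ennreal (2 * L)"
    using L0 d by (intro ennreal_leI) (simp add: mult_left_le)
  finally show ?thesis by (simp add: T_def L_def)
qed



definition Eset :: "nat \<Rightarrow> nat \<Rightarrow> real \<Rightarrow> real \<Rightarrow> (real \<times> real) set" where
  "Eset m n \<delta> r0 = {z. \<delta> \<le> fst z \<and> fst z \<le> r0 \<and> \<delta> \<le> snd z \<and> snd z \<le> r0 \<and>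
     (\<exists>a\<in>Apq (fst z) (snd z). \<exists>b\<in>Apq (fst z) (snd z). fst z ^ m * a = snd z ^ n * b)}"

definition W3 :: "nat \<Rightarrow> nat list set" where
  "W3 k = {u. set u \<subseteq> {1,2,3,4} \<and> length u = Suc k \<and> hd u \<in> {3,4}}"

definition Uset :: "nat \<Rightarrow> nat \<Rightarrow> real \<Rightarrow> real \<Rightarrow> nat \<Rightarrow> (real \<times> real) set" where
  "Uset m n \<delta> r0 k = (\<Union>uv\<in>W3 k \<times> W3 k. Tset m n (fst uv) (snd uv) \<delta> r0 (2 * r0 ^ k))"

lemma W3_finite: "finite (W3 k)" and W3_card: "card (W3 k) \<le> 4 ^ Suc k"
proof -
  have sub: "W3 k \<subseteq> {u. set u \<subseteq> {1::nat,2,3,4} \<and> length u = Suc k}" by (auto simp: W3_def)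
  have f: "finite {u. set u \<subseteq> {1::nat,2,3,4} \<and> length u = Suc k}"
    by (rule finite_lists_length_eq) simp
  show "finite (W3 k)" using finite_subset[OF sub f] .
  have "card (W3 k) \<le> card {u. set u \<subseteq> {1::nat,2,3,4} \<and> length u = Suc k}"
    by (rule card_mono[OF f sub])
  also have "\<dots> = card {1::nat,2,3,4} ^ Suc k" by (rule card_lists_length_eq) simp
  also have "card {1::nat,2,3,4} = 4" by simp
  finally show "card (W3 k) \<le> 4 ^ Suc k" .
qed

lemma Apq_word:
  assumes "0 < p" "p < 1" "0 < q" "q < 1" "a \<in> Apq p q"
  shows "\<exists>u y. u \<in> W3 k \<and> 0 \<le> y \<and> y \<le> 1 \<and> a = Sw p q u y"
proof -
  have K: "invar p q (Kpq p q)" using Kpq_invar assms by blast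
  have "\<exists>i x. i \<in> {3,4} \<and> x \<in> Kpq p q \<and> a = Si i p q x"
  proof -
    from assms(5) consider x where "x \<in> Kpq p q" "a = S3 p q x" | x where "x \<in> Kpq p q" "a = S4 p q x"
      by (auto simp: Apq_def)
    then show ?thesis
    proof cases
      case 1 then show ?thesis by (intro exI[of _ 3] exI[of _ x]) (simp add: Si_def S3_def)
    next
      case 2 then show ?thesis by (intro exI[of _ 4] exI[of _ x]) (simp add: Si_def S4_def)
    qed
  qed
  then obtain i x where ix: "i \<in> {3,4}" "x \<in> Kpq p q" "a = Si i p q x" by blast
  obtain w y where wy: "length w = k" "set w \<subseteq> {1,2,3,4}" "y \<in> Kpq p q" "x = Sw p q w y"
    using invar_words[OF K ix(2)] by blast
  have "y \<in> {0..1}" using invar_sub01[OF assms(1-4) K] wy(3) by blast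
  moreover have "i # w \<in> W3 k" using ix wy by (auto simp: W3_def)
  ultimately show ?thesis using ix wy by (intro exI[of _ "i # w"] exI[of _ y]) auto
qed

lemma Eset_sub:
  assumes d: "0 < \<delta>" "r0 \<le> 1/16"
  shows "Eset m n \<delta> r0 \<subseteq> Uset m n \<delta> r0 k"
proof
  fix z assume z: "z \<in> Eset m n \<delta> r0"
  obtain p q where zpq: "z = (p, q)" by (cases z)
  from z obtain a b where b: "\<delta> \<le> p" "p \<le> r0" "\<delta> \<le> q" "q \<le> r0"
      and ab: "a \<in> Apq p q" "b \<in> Apq p q" "p ^ m * a = q ^ n * b"
    by (auto simp: Eset_def zpq)
  have pq: "0 < p" "p < 1" "0 < q" "q < 1" using b d by auto
  obtain u y where uy: "u \<in> W3 k" "0 \<le> y" "y \<le> 1" "a = Sw p q u y"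
    using Apq_word[OF pq ab(1)] by blast
  obtain v y' where vy: "v \<in> W3 k" "0 \<le> y'" "y' \<le> 1" "b = Sw p q v y'"
    using Apq_word[OF pq ab(2)] by blast
  have r0: "0 \<le> r0" "r0 \<le> 1" using b d by auto
  have mpq: "0 \<le> max p q" "max p q \<le> r0" using b d by auto
  have close: "\<bar>Sw p q w t - Sw p q w 0\<bar> \<le> r0 ^ k"
    if "length w = Suc k" "0 \<le> t" "t \<le> 1" for w t
  proof -
    have "\<bar>Sw p q w t - Sw p q w 0\<bar> \<le> max p q ^ Suc k * \<bar>t - 0\<bar>"
      using Sw_lip[of p q w t 0] pq that by simp
    also have "\<dots> \<le> max p q ^ Suc k * 1" using that mpq by (intro mult_left_mono) auto
    also have "\<dots> \<le> r0 ^ Suc k" using power_mono[of "max p q" r0 "Suc k"] mpq by simp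
    also have "\<dots> \<le> r0 ^ k" using r0 by (simp add: mult_left_le_one_le)
    finally show ?thesis .
  qed
  define ea where "ea = Sw p q u 0 - a"
  define eb where "eb = Sw p q v 0 - b"
  have ea: "\<bar>ea\<bar> \<le> r0 ^ k" using close[of u y] uy by (auto simp: ea_def W3_def abs_minus_commute)
  have eb: "\<bar>eb\<bar> \<le> r0 ^ k" using close[of v y'] vy by (auto simp: eb_def W3_def abs_minus_commute)
  have pm: "0 \<le> p ^ m" "p ^ m \<le> 1" "0 \<le> q ^ n" "q ^ n \<le> 1" using pq by (auto simp: power_le_one)
  have "\<bar>p ^ m * ea\<bar> \<le> 1 * r0 ^ k" unfolding abs_mult using pm ea by (intro mult_mono) auto
  moreover have "\<bar>q ^ n * eb\<bar> \<le> 1 * r0 ^ k" unfolding abs_mult using pm eb by (intro mult_mono) auto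
  moreover have "Gf m n u v (p, q) = p ^ m * ea - q ^ n * eb"
    using ab(3) by (simp add: Gf_def ea_def eb_def algebra_simps)
  ultimately have "\<bar>Gf m n u v (p, q)\<bar> \<le> 2 * r0 ^ k" by linarith
  then have "(p, q) \<in> Tset m n u v \<delta> r0 (2 * r0 ^ k)" using b by (simp add: Tset_def)
  then show "z \<in> Uset m n \<delta> r0 k" using uy(1) vy(1) zpq by (auto simp: Uset_def)
qed

lemma Uset_sets: "Uset m n \<delta> r0 k \<in> sets lborel"
  unfolding Uset_def using W3_finite by (intro sets.finite_UN) (auto intro: Tset_sets[unfolded sets_lborel])

lemma Uset_measure:
  assumes d: "0 < \<delta>" "\<delta> \<le> r0" "r0 \<le> 1/16" "n \<ge> 1"
  shows "emeasure lborel (Uset m n \<delta> r0 k) \<le> ennreal (16 ^ Suc k * (16 * r0 ^ k / \<delta> ^ (n - 1)))"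
proof -
  define c where "c = 16 * r0 ^ k / \<delta> ^ (n - 1)"
  have c0: "0 \<le> c" using d by (simp add: c_def)
  have fin: "finite (W3 k \<times> W3 k)" using W3_finite by simp
  have "emeasure lborel (Uset m n \<delta> r0 k) \<le>
      (\<Sum>uv\<in>W3 k \<times> W3 k. emeasure lborel (Tset m n (fst uv) (snd uv) \<delta> r0 (2 * r0 ^ k)))"
    unfolding Uset_def by (rule emeasure_subadditive_finite[OF fin]) (auto intro: Tset_sets[unfolded sets_lborel])
  also have "\<dots> \<le> (\<Sum>uv\<in>W3 k \<times> W3 k. ennreal c)"
  proof (rule sum_mono)
    fix uv assume "uv \<in> W3 k \<times> W3 k"
    then obtain u v where uv: "uv = (u, v)" "u \<in> W3 k" "v \<in> W3 k" by auto
    have "u \<noteq> []" "v \<noteq> []" using uv by (auto simp: W3_def)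
    then have u: "u = hd u # tl u" "hd u \<in> {3,4}" and v: "v = hd v # tl v" "hd v \<in> {3,4}"
      using uv by (auto simp: W3_def)
    have "emeasure lborel (Tset m n u v \<delta> r0 (2 * r0 ^ k)) \<le> ennreal (8 * (2 * r0 ^ k) / \<delta> ^ (n - 1))"
      using d by (intro Tset_measure[OF d(1-4) _ u v]) auto
    then show "emeasure lborel (Tset m n (fst uv) (snd uv) \<delta> r0 (2 * r0 ^ k)) \<le> ennreal c"
      by (simp add: uv c_def)
  qed
  also have "\<dots> = ennreal (real (card (W3 k \<times> W3 k)) * c)"
    using c0 by (simp add: ennreal_mult ennreal_of_nat_eq_real_of_nat)
  also have "\<dots> \<le> ennreal (16 ^ Suc k * c)"
  proof (intro ennreal_leI mult_right_mono c0)
    have "card (W3 k \<times> W3 k) = card (W3 k) * card (W3 k)" by (simp add: card_cartesian_product)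
    also have "\<dots> \<le> 4 ^ Suc k * 4 ^ Suc k" using W3_card by (intro mult_mono) auto
    also have "\<dots> = 16 ^ Suc k" by (simp add: power_mult_distrib[symmetric])
    finally have "card (W3 k \<times> W3 k) \<le> (16::nat) ^ Suc k" .
    then show "real (card (W3 k \<times> W3 k)) \<le> 16 ^ Suc k"
      by (metis of_nat_le_iff of_nat_numeral of_nat_power)
  qed
  finally show ?thesis by (simp add: c_def)
qed

lemma Eset_null:
  assumes d: "0 < \<delta>" "\<delta> \<le> r0" "r0 < 1/16" "n \<ge> 1"
  shows "Eset m n \<delta> r0 \<in> null_sets lebesgue"
proof -
  define N where "N = (\<Inter>k. Uset m n \<delta> r0 k)"
  have Ns: "N \<in> sets lborel" unfolding N_def by (intro sets.countable_INT) (auto intro: Uset_sets[unfolded sets_lborel])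
  have "Eset m n \<delta> r0 \<subseteq> Uset m n \<delta> r0 k" for k using Eset_sub[of \<delta> r0 m n k] d by simp
  then have EN: "Eset m n \<delta> r0 \<subseteq> N" unfolding N_def by blast
  define C where "C = 256 / \<delta> ^ (n - 1)"
  have C0: "0 < C" using d by (simp add: C_def)
  have bound: "emeasure lborel N \<le> ennreal (C * (16 * r0) ^ k)" for k
  proof -
    have "emeasure lborel N \<le> emeasure lborel (Uset m n \<delta> r0 k)"
      unfolding N_def by (intro emeasure_mono) (auto intro: Uset_sets[unfolded sets_lborel])
    also have "\<dots> \<le> ennreal (16 ^ Suc k * (16 * r0 ^ k / \<delta> ^ (n - 1)))"
      using Uset_measure d by auto
    also have "16 ^ Suc k * (16 * r0 ^ k / \<delta> ^ (n - 1)) = C * (16 * r0) ^ k"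
      by (simp add: C_def power_mult_distrib field_simps)
    finally show ?thesis .
  qed
  have "emeasure lborel N \<le> 0"
  proof (rule ennreal_le_epsilon)
    fix e :: real assume "0 < e"
    have "16 * r0 < 1" using d by simp
    moreover have "0 < e / C" using \<open>0 < e\<close> C0 by simp
    ultimately obtain k where k: "(16 * r0) ^ k < e / C" using real_arch_pow_inv by blast
    then have "C * (16 * r0) ^ k \<le> e" using C0 by (simp add: field_simps)
    then have "emeasure lborel N \<le> ennreal e" using bound[of k] by (meson ennreal_leI order_trans)
    then show "emeasure lborel N \<le> 0 + ennreal e" by simp
  qed
  then have "N \<in> null_sets lborel" using Ns by (auto intro: null_setsI)
  then have "N \<in> null_sets lebesgue" by (rule null_sets_completionI)
  then show ?thesis using EN null_sets_completion_subset by blast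
qed



lemma S1_pow: "(S1 p q ^^ m) x = p ^ m * x"
  by (induction m) (auto simp: S1_def)

lemma S2_pow: "(S2 p q ^^ m) x = q ^ m * x"
  by (induction m) (auto simp: S2_def)

lemma one_in_A:
  assumes "0 < p" "p < 1" "0 < q" "q < 1"
  shows "1 \<in> Apq p q"
proof -
  have "1 \<in> Kpq p q" using invar_one[OF assms Kpq_invar[OF assms]] .
  then have "S3 p q 1 \<in> Apq p q" by (auto simp: Apq_def)
  then show ?thesis by (simp add: S3_def)
qed

lemma not_twofold_pow:
  assumes "0 < p" "p < 1" "0 < q" "q < 1" "m \<ge> 1" "n \<ge> 1" "p ^ m = q ^ n"
  shows "\<not> twofold_cantor p q"
proof -
  have "p ^ m \<in> (S1 p q ^^ m) ` Apq p q" using one_in_A[OF assms(1-4)]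
    by (auto simp: S1_pow intro!: image_eqI[of _ _ 1])
  moreover have "p ^ m \<in> (S2 p q ^^ n) ` Apq p q" using one_in_A[OF assms(1-4)] assms(7)
    by (auto simp: S2_pow intro!: image_eqI[of _ _ 1])
  ultimately show ?thesis unfolding twofold_cantor_def using assms(5,6) by blast
qed

theorem theorem19:
  fixes V KK :: "(real \<times> real) set"
  assumes "V = {0<..<1/16} \<times> {0<..<1/16}"
      and "KK = {(p, q) \<in> V. twofold_cantor p q}"
  shows "V - KK \<in> null_sets lebesgue
         \<and> uncountable (V - KK)
         \<and> V \<subseteq> closure (V - KK)"
proof (intro conjI)
  define dl :: "nat \<Rightarrow> real" where "dl j = 1 / real (Suc j)" for j
  define F where "F t = Eset (Suc (fst t)) (Suc (fst (snd t))) (dl (snd (snd t))) (1/16 - dl (snd (snd t)))"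
    for t :: "nat \<times> nat \<times> nat"
  have Fnull: "F t \<in> null_sets lebesgue" for t
  proof (cases "dl (snd (snd t)) \<le> 1/16 - dl (snd (snd t))")
    case True
    have "0 < dl (snd (snd t))" by (simp add: dl_def)
    then show ?thesis unfolding F_def using True by (intro Eset_null) auto
  next
    case False
    then have "F t = {}" by (auto simp: F_def Eset_def)
    then show ?thesis by simp
  qed
  have sub: "V - KK \<subseteq> (\<Union>t. F t)"
  proof
    fix z assume z: "z \<in> V - KK"
    obtain p q where zpq: "z = (p, q)" by (cases z)
    have V: "0 < p" "p < 1/16" "0 < q" "q < 1/16" using z assms zpq by auto
    have "\<not> twofold_cantor p q" using z assms zpq by auto
    then obtain m n where mn: "m \<ge> 1" "n \<ge> 1" "(S1 p q ^^ m) ` Apq p q \<inter> (S2 p q ^^ n) ` Apq p q \<noteq> {}"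
      unfolding twofold_cantor_def by blast
    then obtain a b where ab: "a \<in> Apq p q" "b \<in> Apq p q" "p ^ m * a = q ^ n * b"
      by (auto simp: S1_pow S2_pow)
    define c where "c = min (min p q) (min (1/16 - p) (1/16 - q))"
    have "0 < c" using V by (simp add: c_def)
    then obtain N :: nat where N: "N > 0" "inverse (real N) < c" using ex_inverse_of_nat_less by blast
    define j where "j = N - 1"
    have dj: "dl j < c" using N by (simp add: dl_def j_def inverse_eq_divide)
    have "z \<in> F (m - 1, n - 1, j)"
      using dj ab mn V unfolding F_def Eset_def zpq c_def by auto
    then show "z \<in> (\<Union>t. F t)" by blast
  qed
  have "(\<Union>t. F t) \<in> null_sets lebesgue" using Fnull by blast
  then show "V - KK \<in> null_sets lebesgue" using sub null_sets_completion_subset by blast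
next
  have diag: "(\<lambda>t. (t, t)) ` {0<..<1/16::real} \<subseteq> V - KK"
  proof clarify
    fix t :: real assume t: "t \<in> {0<..<1/16}"
    have "\<not> twofold_cantor t t" using t by (intro not_twofold_pow[of t t 1 1]) auto
    then show "(t, t) \<in> V - KK" using t assms by auto
  qed
  show "uncountable (V - KK)"
  proof
    assume "countable (V - KK)"
    then have "countable ((\<lambda>t. (t, t)) ` {0<..<1/16::real})" using diag countable_subset by blast
    then have "countable (fst ` (\<lambda>t. (t, t)) ` {0<..<1/16::real})" by blast
    moreover have "fst ` (\<lambda>t. (t, t)) ` {0<..<1/16::real} = {0<..<1/16}" by (auto simp: image_image)
    ultimately show False using uncountable_open_interval[of 0 "1/16::real"] by simp
  qed
next
  show "V \<subseteq> closure (V - KK)"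
  proof
    fix z assume z: "z \<in> V"
    obtain p q where zpq: "z = (p, q)" by (cases z)
    have V: "0 < p" "p < 1/16" "0 < q" "q < 1/16" using z assms zpq by auto
    have lp: "ln p < 0" "ln q < 0" using V by auto
    define t0 where "t0 = ln q / ln p"
    have t0: "0 < t0" using lp by (simp add: t0_def divide_neg_neg)
    have gt0: "p powr t0 = q" using V lp by (simp add: t0_def powr_def)
    have cont: "isCont (\<lambda>t. p powr t) t0" using V by (auto intro!: continuous_intros)
    show "z \<in> closure (V - KK)"
      unfolding closure_approachable
    proof (intro allI impI)
      fix e :: real assume "0 < e"
      define eps where "eps = min e (min q (1/16 - q))"
      have eps: "0 < eps" using \<open>0 < e\<close> V by (simp add: eps_def)
      obtain d where d: "0 < d" "\<And>t. dist t t0 < d \<Longrightarrow> dist (p powr t) (p powr t0) < eps"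
        using cont[unfolded continuous_at_eps_delta] eps by blast
      obtain r where r: "r \<in> \<rat>" "max (t0 - d) (t0 / 2) < r" "r < t0"
        using Rats_dense_in_real[of "max (t0 - d) (t0 / 2)" t0] t0 d by auto
      obtain a b :: int where ab: "b > 0" "r = of_int a / of_int b" using Rats_cases'[OF r(1)] by metis
      have r0: "0 < r" using r t0 by linarith
      then have a0: "a > 0" using ab by (simp add: zero_less_divide_iff)
      define q' where "q' = p powr r"
      have "dist q' q < eps" using d(2)[of r] r gt0 by (simp add: q'_def dist_real_def)
      then have q': "0 < q'" "q' < 1/16" "\<bar>q' - q\<bar> < e" by (auto simp: eps_def dist_real_def)
      have "q' ^ nat b = q' powr real (nat b)" using q' by (simp add: powr_realpow)
      also have "\<dots> = p powr (r * real (nat b))" by (simp add: q'_def powr_powr)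
      also have "r * real (nat b) = real (nat a)" using ab a0 by simp
      also have "p powr real (nat a) = p ^ nat a" using V by (simp add: powr_realpow)
      finally have eq: "p ^ nat a = q' ^ nat b" by simp
      have "\<not> twofold_cantor p q'"
        using V q' a0 ab(1) eq by (intro not_twofold_pow[of p q' "nat a" "nat b"]) auto
      then have "(p, q') \<in> V - KK" using V q' assms by auto
      moreover have "dist (p, q') z < e" using q' by (simp add: zpq dist_Pair_Pair dist_real_def)
      ultimately show "\<exists>y\<in>V - KK. dist y z < e" by blast
    qed
  qed
qed

end
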